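(* For all positive integers $m_1,m_2$ there exists an integer sequence $(f_j)_{j\ge0}$ such that for every $j\in\mathbb{Z}_{\ge0}$: (i) $0\le f_j\le m_1+m_2$; (ii) $f_j+j$ is divisible by $m_1$; and (iii) $((f_j-j)\bmod m_2)\in\{0,1,\dots,m_1\}$.
   Context: For integers $a$ and $b>0$, $(a\bmod b)\in\{0,\dots,b-1\}$ denotes the remainder of $a$ upon division by $b$. *)

theory Defs
  imports Main
begin

end

theory Submission
  imports Defs
begin

theorem lemma16:
  fixes m1 m2 :: int
  assumes "m1 > 0" and "m2 > 0"
  shows "\<exists>f :: nat \<Rightarrow> int. \<forall>j :: nat.
           0 \<le> f j \<and> f j \<le> m1 + m2 \<and>
           m1 dvd (f j + int j) \<and>
           (f j - int j) mod m2 \<in> {0..m1}"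
proof (intro exI allI)
  fix j :: nat
  define a where "a = int j mod m2"
  define b where "b = (- int j - a) mod m1"
  have a0: "0 \<le> a" "a < m2" using assms by (auto simp: a_def)
  have b0: "0 \<le> b" "b < m1" using assms by (auto simp: b_def)
  have d1: "m1 dvd (a + b + int j)"
  proof -
    have "(a + b + int j) mod m1 = (a + (- int j - a) + int j) mod m1"
      unfolding b_def by (metis mod_add_left_eq mod_add_right_eq)
    then show ?thesis by (simp add: dvd_eq_mod_eq_0)
  qed
  have e: "(a + b - int j) mod m2 = b mod m2"
  proof -
    have "(a + b - int j) mod m2 = (int j mod m2 + b - int j) mod m2" by (simp add: a_def)
    also have "\<dots> = (int j + b - int j) mod m2" by (metis mod_add_left_eq mod_diff_left_eq)
    finally show ?thesis by simp
  qed
  have "b mod m2 \<le> b" using b0 assms by (simp add: zmod_le_nonneg_dividend)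
  hence "(a + b - int j) mod m2 \<in> {0..m1}" using e b0 assms by simp
  then show "0 \<le> (\<lambda>j. int j mod m2 + (- int j - int j mod m2) mod m1) j \<and>
           (\<lambda>j. int j mod m2 + (- int j - int j mod m2) mod m1) j \<le> m1 + m2 \<and>
           m1 dvd ((\<lambda>j. int j mod m2 + (- int j - int j mod m2) mod m1) j + int j) \<and>
           ((\<lambda>j. int j mod m2 + (- int j - int j mod m2) mod m1) j - int j) mod m2 \<in> {0..m1}"
    using a0 b0 d1 by (simp add: a_def b_def)
qed

end
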